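(* For every conditional model $\mathfrak{M}$ satisfying the limit assumption, every world $w$, all formulas $\varphi,\psi$ and every finite set of formulas $\Gamma$: $\mathfrak{M},w\models\varphi\sqsubseteq^\Gamma\psi$ iff $$\mathfrak{M},w\models\bigwedge_{\gamma\in\Gamma^*}\Big(\gamma\rightarrow\bigwedge_{\lambda\subseteq\gamma}\Big[\Big(\bigwedge_{\lambda\subsetneq\lambda'\subseteq\gamma}\neg\Diamond(\varphi\wedge\lambda')\Big)\rightarrow\big((\varphi\wedge\lambda)\preceq(\psi\wedge\lambda)\big)\Big]\Big).$$ Consequently $\sqsubseteq^\Gamma$ is expressible using only $\preceq$ and Boolean connectives.
   Context: A conditional model is $\mathfrak{M}=(W,\preceq,V)$: $W\ne\emptyset$, $V(p)\subseteq W$ for each propositional variable, and for each $w\in W$ a set $W_w\subseteq W$ with $w\in W_w$ and a reflexive, transitive, total relation $\preceq_w$ on $W_w$ with $w\prec_w v$ for all $v\in W_w\setminus\{w\}$; the limit assumption requires these relations (and those below) to be well-founded. $A_\Gamma(u,v)=\{\gamma\in\Gamma:\mathfrak{M},u\models\gamma\iff\mathfrak{M},v\models\gamma\}$; on $W_w$, $u\sqsubseteq^\Gamma_w v$ iff $A_\Gamma(v,w)\subsetneq A_\Gamma(u,w)$, or $A_\Gamma(v,w)=A_\Gamma(u,w)$ and $u\preceq_w v$. $\mathfrak{M},w\models\varphi\preceq\psi$ iff for every $u\in W_w$ with $u\models\psi$ there is $v\in W_w$ with $v\models\varphi$ and $v\preceq_w u$; $\mathfrak{M},w\models\varphi\sqsubseteq^\Gamma\psi$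 is defined the same way with $\sqsubseteq^\Gamma_w$ in place of $\preceq_w$. $\varphi\prec\psi:=\neg(\psi\preceq\varphi)$, $\Diamond\varphi:=\varphi\prec\bot$ (true at $w$ iff some $u\in W_w$ satisfies $\varphi$). $\Gamma^*$ is the set of all conjunctions $\bigwedge_{\gamma\in\Gamma}\pm\gamma$ with each $\pm\gamma\in\{\gamma,\neg\gamma\}$. A conjunction is identified with its set of conjuncts, so $\lambda\subseteq\gamma$ ranges over subsets of the conjuncts of $\gamma$ (treated as conjunctions). *)

theory Defs
  imports Main
begin

text \<open>Formulas of the conditional language with the comparative operator
  Pref (phi preceq psi) and the Gamma-relativised operator Sq G phi psi
  (phi sqsubseteq^Gamma psi), where the finite set Gamma is given by a list.\<close>

datatype form =
    Var nat
  | Bot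
  | Neg form
  | And form form
  | Imp form form
  | Pref form form
  | Sq "form list" form form

definition Top :: form where "Top = Neg Bot"

definition Prec :: "form \<Rightarrow> form \<Rightarrow> form" where
  "Prec f g = Neg (Pref g f)"

definition Dia :: "form \<Rightarrow> form" where
  "Dia f = Prec f Bot"

definition Conj :: "form list \<Rightarrow> form" where
  "Conj xs = foldr And xs Top"

record 'w cmodel =
  Wo  :: "'w set"
  Ws  :: "'w \<Rightarrow> 'w set"
  Rel :: "'w \<Rightarrow> 'w \<Rightarrow> 'w \<Rightarrow> bool"   (* Rel M w u v  means  u preceq_w v *)
  Val :: "nat \<Rightarrow> 'w set"

function sat :: "'w cmodel \<Rightarrow> 'w \<Rightarrow> form \<Rightarrow> bool" where
  "sat M w (Var p) = (w \<in> Val M p)"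
| "sat M w Bot = False"
| "sat M w (Neg f) = (\<not> sat M w f)"
| "sat M w (And f g) = (sat M w f \<and> sat M w g)"
| "sat M w (Imp f g) = (sat M w f \<longrightarrow> sat M w g)"
| "sat M w (Pref f g) =
     (\<forall>u\<in>Ws M w. sat M u g \<longrightarrow> (\<exists>v\<in>Ws M w. sat M v f \<and> Rel M w v u))"
| "sat M w (Sq G f g) =
     (\<forall>u\<in>Ws M w. sat M u g \<longrightarrow> (\<exists>v\<in>Ws M w. sat M v f \<and>
        (let A = (\<lambda>x. set (filter (\<lambda>\<gamma>. sat M x \<gamma> = sat M w \<gamma>) G))
         in A u \<subset> A v \<or> (A u = A v \<and> Rel M w v u))))"
  by pat_completeness auto
termination
  by (relation "measure (\<lambda>(M, w, f). size f)")
     (auto simp: less_Suc_eq_le intro: trans_le_add1 size_list_estimation')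

definition agree :: "'w cmodel \<Rightarrow> form list \<Rightarrow> 'w \<Rightarrow> 'w \<Rightarrow> form set" where
  "agree M G u v = {\<gamma>\<in>set G. sat M u \<gamma> = sat M v \<gamma>}"

definition sqle :: "'w cmodel \<Rightarrow> form list \<Rightarrow> 'w \<Rightarrow> 'w \<Rightarrow> 'w \<Rightarrow> bool" where
  "sqle M G w u v =
     (agree M G v w \<subset> agree M G u w \<or> (agree M G v w = agree M G u w \<and> Rel M w u v))"

definition wf_preorder_on :: "'w set \<Rightarrow> ('w \<Rightarrow> 'w \<Rightarrow> bool) \<Rightarrow> bool" where
  "wf_preorder_on S r = wf {(u, v). u \<in> S \<and> v \<in> S \<and> r u v \<and> \<not> r v u}"

definition cond_model :: "'w cmodel \<Rightarrow> bool" where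
  "cond_model M \<longleftrightarrow>
     Wo M \<noteq> {} \<and>
     (\<forall>p. Val M p \<subseteq> Wo M) \<and>
     (\<forall>w\<in>Wo M. Ws M w \<subseteq> Wo M \<and> w \<in> Ws M w \<and>
        (\<forall>u\<in>Ws M w. Rel M w u u) \<and>
        (\<forall>u\<in>Ws M w. \<forall>v\<in>Ws M w. \<forall>x\<in>Ws M w. Rel M w u v \<longrightarrow> Rel M w v x \<longrightarrow> Rel M w u x) \<and>
        (\<forall>u\<in>Ws M w. \<forall>v\<in>Ws M w. Rel M w u v \<or> Rel M w v u) \<and>
        (\<forall>v\<in>Ws M w - {w}. Rel M w w v \<and> \<not> Rel M w v w))"

definition limit_assumption :: "'w cmodel \<Rightarrow> bool" where
  "limit_assumption M \<longleftrightarrow>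
     (\<forall>w\<in>Wo M. wf_preorder_on (Ws M w) (Rel M w) \<and>
        (\<forall>G. wf_preorder_on (Ws M w) (sqle M G w)))"

definition lit :: "bool \<Rightarrow> form \<Rightarrow> form" where
  "lit b g = (if b then g else Neg g)"

text \<open>Conjuncts of the element of Gamma^* determined by the sign vector s.\<close>
definition lits :: "form list \<Rightarrow> bool list \<Rightarrow> form list" where
  "lits G s = map2 lit s G"

text \<open>Gamma^*: all sign vectors of length |Gamma|.\<close>
definition signs :: "form list \<Rightarrow> bool list list" where
  "signs G = List.n_lists (length G) [True, False]"

text \<open>Subsets of gamma are enumerated as sublists; they are compared as sets of conjuncts.\<close>
definition inner :: "form \<Rightarrow> form \<Rightarrow> form list \<Rightarrow> form" where
  "inner f g ls =
     Conj (map (\<lambda>lam.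
        Imp (Conj (map (\<lambda>lam'. Neg (Dia (And f (Conj lam'))))
                       (filter (\<lambda>lam'. set lam \<subset> set lam') (subseqs ls))))
            (Pref (And f (Conj lam)) (And g (Conj lam))))
       (subseqs ls))"

definition translation :: "form list \<Rightarrow> form \<Rightarrow> form \<Rightarrow> form" where
  "translation G f g =
     Conj (map (\<lambda>s. Imp (Conj (lits G s)) (inner f g (lits G s))) (signs G))"

end

theory Submission
  imports Defs
begin

lemma sat_Conj: "sat M x (Conj xs) \<longleftrightarrow> (\<forall>a\<in>set xs. sat M x a)"
  by (induction xs) (auto simp: Conj_def Top_def)

lemma sat_Dia: "sat M x (Dia h) \<longleftrightarrow> (\<exists>u\<in>Ws M x. sat M u h)"
  by (auto simp: Dia_def Prec_def)

lemma lits_w: "length s = length G \<Longrightarrow>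
   sat M w (Conj (lits G s)) \<longleftrightarrow> s = map (sat M w) G"
proof (induction s G rule: list_induct2)
  case Nil then show ?case by (simp add: lits_def Conj_def Top_def)
next
  case (Cons b s g G)
  have "sat M w (lit b g) \<longleftrightarrow> b = sat M w g" by (cases b) (auto simp: lit_def)
  with Cons show ?case by (simp add: lits_def sat_Conj)
qed

lemma subseqs_set: "T \<in> set (subseqs L) \<Longrightarrow> set T \<subseteq> set L"
proof -
  assume "T \<in> set (subseqs L)"
  then have "set T \<in> set ` set (subseqs L)" by (rule imageI)
  then show ?thesis unfolding subseqs_powset by simp
qed

theorem mainTheorem7:
  fixes M :: "'w cmodel" and w :: 'w and f g :: form and G :: "form list"
  assumes "cond_model M" and "limit_assumption M" and "w \<in> Wo M"
  shows "sat M w (Sq G f g) \<longleftrightarrow> sat M w (translation G f g)"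
proof -
  define L where "L = lits G (map (sat M w) G)"
  define lw where "lw = (\<lambda>g. lit (sat M w g) g)"
  have setL: "set L = lw ` set G" unfolding L_def lits_def lw_def by (induction G) auto
  have lwsat: "\<And>x g. sat M x (lw g) \<longleftrightarrow> (sat M x g \<longleftrightarrow> sat M w g)"
    by (auto simp: lw_def lit_def)
  define A where "A = (\<lambda>x. set (filter (\<lambda>\<gamma>. sat M x \<gamma> = sat M w \<gamma>) G))"
  define S where "S = (\<lambda>x. {a \<in> set L. sat M x a})"
  have SA: "\<And>x. S x = lw ` A x" using setL lwsat by (auto simp: S_def A_def)
  have AS: "\<And>x g. g \<in> A x \<longleftrightarrow> g \<in> set G \<and> lw g \<in> S x"
    using setL lwsat by (auto simp: S_def A_def)
  have sub: "\<And>x y. A x \<subseteq> A y \<longleftrightarrow> S x \<subseteq> S y"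
  proof
    fix x y assume "A x \<subseteq> A y" then show "S x \<subseteq> S y" using SA by auto
  next
    fix x y assume "S x \<subseteq> S y" then show "A x \<subseteq> A y" using AS by blast
  qed
  have eqq: "\<And>x y. A x = A y \<longleftrightarrow> S x = S y" using sub by blast
  have psub: "\<And>x y. A x \<subset> A y \<longleftrightarrow> S x \<subset> S y" using sub eqq by blast
  have Af: "\<And>x. set (filter (\<lambda>\<gamma>. sat M x \<gamma> = sat M w \<gamma>) G) = A x" by (simp add: A_def)
  have sq: "sat M w (Sq G f g) \<longleftrightarrow> (\<forall>u\<in>Ws M w. sat M u g \<longrightarrow>
      (\<exists>v\<in>Ws M w. sat M v f \<and> (S u \<subset> S v \<or> (S u = S v \<and> Rel M w v u))))"
    by (simp only: sat.simps Let_def Af psub eqq)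
  have SL: "\<And>x. S x \<subseteq> set L" by (auto simp: S_def)
  have cj: "\<And>T x. T \<in> set (subseqs L) \<Longrightarrow> sat M x (Conj T) \<longleftrightarrow> set T \<subseteq> S x"
    using subseqs_set by (auto simp: sat_Conj S_def)
  have tr: "sat M w (translation G f g) \<longleftrightarrow> sat M w (inner f g L)"
  proof -
    have s0: "map (sat M w) G \<in> set (signs G)" by (auto simp: signs_def set_n_lists)
    have "\<And>s. s \<in> set (signs G) \<Longrightarrow> sat M w (Conj (lits G s)) \<longleftrightarrow> s = map (sat M w) G"
      by (rule lits_w) (simp add: signs_def set_n_lists)
    then have e: "\<And>s. s \<in> set (signs G) \<Longrightarrow> sat M w (Conj (lits G s)) \<longleftrightarrow> s = map (sat M w) G" .
    have "sat M w (translation G f g) \<longleftrightarrow>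
      (\<forall>s\<in>set (signs G). sat M w (Conj (lits G s)) \<longrightarrow> sat M w (inner f g (lits G s)))"
      unfolding translation_def sat_Conj[of M w "map _ _"] by simp
    also have "\<dots> \<longleftrightarrow> sat M w (inner f g L)" unfolding L_def using e s0 by metis
    finally show ?thesis .
  qed
  have inn: "sat M w (inner f g L) \<longleftrightarrow> (\<forall>T\<in>set (subseqs L).
     (\<forall>T'\<in>set (subseqs L). set T \<subset> set T' \<longrightarrow> \<not>(\<exists>x\<in>Ws M w. sat M x f \<and> set T' \<subseteq> S x))
     \<longrightarrow> (\<forall>u\<in>Ws M w. sat M u g \<and> set T \<subseteq> S u \<longrightarrow>
           (\<exists>v\<in>Ws M w. sat M v f \<and> set T \<subseteq> S v \<and> Rel M w v u)))"
  proof -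
    have neg: "\<And>T. sat M w (Conj (map (\<lambda>lam'. Neg (Dia (And f (Conj lam'))))
                    (filter (\<lambda>lam'. set T \<subset> set lam') (subseqs L)))) \<longleftrightarrow>
        (\<forall>T'\<in>set (subseqs L). set T \<subset> set T' \<longrightarrow> \<not>(\<exists>x\<in>Ws M w. sat M x f \<and> set T' \<subseteq> S x))"
      unfolding sat_Conj[of M w "map _ _"] by (auto simp: sat_Dia cj)
    show ?thesis unfolding inner_def sat_Conj[of M w "map _ _"] set_map
      by (simp add: neg cj)
  qed
  show ?thesis
  proof
    assume H: "sat M w (Sq G f g)"
    show "sat M w (translation G f g)" unfolding tr inn
    proof (intro ballI impI allI, elim conjE)
      fix T u
      assume T: "T \<in> set (subseqs L)"
        and N: "\<forall>T'\<in>set (subseqs L). set T \<subset> set T' \<longrightarrow> \<not>(\<exists>x\<in>Ws M w. sat M x f \<and> set T' \<subseteq> S x)"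
        and u: "u \<in> Ws M w" "sat M u g" "set T \<subseteq> S u"
      obtain v where v: "v \<in> Ws M w" "sat M v f" "S u \<subset> S v \<or> (S u = S v \<and> Rel M w v u)"
        using H u unfolding sq by blast
      obtain T' where T': "T' \<in> set (subseqs L)" "set T' = S v"
        using subset_subseqs[OF SL[of v]] by blast
      have "\<not> set T \<subset> S v" using N T' v by blast
      then have "set T = S v" using u v by blast
      then have "S u = S v \<and> Rel M w v u" using u v by blast
      then show "\<exists>v\<in>Ws M w. sat M v f \<and> set T \<subseteq> S v \<and> Rel M w v u" using v u by blast
    qed
  next
    assume "sat M w (translation G f g)"
    then have H: "\<forall>T\<in>set (subseqs L).
     (\<forall>T'\<in>set (subseqs L). set T \<subset> set T' \<longrightarrow> \<not>(\<exists>x\<in>Ws M w. sat M x f \<and> set T' \<subseteq> S x))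
     \<longrightarrow> (\<forall>u\<in>Ws M w. sat M u g \<and> set T \<subseteq> S u \<longrightarrow>
           (\<exists>v\<in>Ws M w. sat M v f \<and> set T \<subseteq> S v \<and> Rel M w v u))" unfolding tr inn .
    show "sat M w (Sq G f g)" unfolding sq
    proof (intro ballI impI)
      fix u assume u: "u \<in> Ws M w" "sat M u g"
      show "\<exists>v\<in>Ws M w. sat M v f \<and> (S u \<subset> S v \<or> (S u = S v \<and> Rel M w v u))"
      proof (cases "\<exists>v\<in>Ws M w. sat M v f \<and> S u \<subset> S v")
        case True then show ?thesis by blast
      next
        case False
        obtain T where T: "T \<in> set (subseqs L)" "set T = S u"
          using subset_subseqs[OF SL[of u]] by blast
        have N: "\<forall>T'\<in>set (subseqs L). set T \<subset> set T' \<longrightarrow> \<not>(\<exists>x\<in>Ws M w. sat M x f \<and> set T' \<subseteq> S x)"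
          using False T(2) by blast
        have "\<forall>u\<in>Ws M w. sat M u g \<and> set T \<subseteq> S u \<longrightarrow>
           (\<exists>v\<in>Ws M w. sat M v f \<and> set T \<subseteq> S v \<and> Rel M w v u)"
          using bspec[OF H T(1)] N by (rule mp)
        then have "\<exists>v\<in>Ws M w. sat M v f \<and> set T \<subseteq> S v \<and> Rel M w v u"
          using u T(2) by blast
        then obtain v where "v \<in> Ws M w" "sat M v f" "S u \<subseteq> S v" "Rel M w v u"
          using T(2) by blast
        then show ?thesis using False by blast
      qed
    qed
  qed
qed

end
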